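(* Let $\mu_0=\sum_{i=1}^{N_0}p_0^i\nu_0^i$ and $\mu_1=\sum_{j=1}^{N_1}p_1^j\nu_1^j$ be Gaussian mixture distributions on $\mathbb{R}^n$, let $\pi^*$ be a minimizer of $\sum_{i,j}W_2(\nu_0^i,\nu_1^j)^2\pi(i,j)$ over $\pi\in\Pi(p_0,p_1)$, and for $t\in[0,1]$ define $\mu_t=\sum_{i,j}\pi^*(i,j)\,\nu_t^{ij}$, where $\nu_t^{ij}$ is the displacement interpolation between $\nu_0^i$ and $\nu_1^j$ defined below. Then $d(\mu_s,\mu_t)=(t-s)\,d(\mu_0,\mu_1)$ for all $0\le s<t\le 1$.
   Context: A Gaussian distribution on $\mathbb{R}^n$ is the normal law $N(m,\Sigma)$ with mean $m\in\mathbb{R}^n$ and symmetric positive definite covariance $\Sigma$. For two Gaussians $\nu_0=N(m_0,\Sigma_0)$, $\nu_1=N(m_1,\Sigma_1)$, $W_2(\nu_0,\nu_1)$ denotes their 2-Wasserstein distance, which equals $W_2(\nu_0,\nu_1)^2=\|m_0-m_1\|^2+\operatorname{trace}\big(\Sigma_0+\Sigma_1-2(\Sigma_0^{1/2}\Sigma_1\Sigma_0^{1/2})^{1/2}\big)$; their displacement interpolation at time $t\in[0,1]$ is the Gaussian $\nu_t=N(m_t,\Sigma_t)$ with $m_t=(1-t)m_0+tm_1$ and $\Sigma_t=\Sigma_0^{-1/2}\big((1-t)\Sigma_0+t(\Sigma_0^{1/2}\Sigma_1\Sigma_0^{1/2})^{1/2}\big)^2\Sigma_0^{-1/2}$. A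 Gaussian mixture distribution is a probability distribution $\mu=\sum_{k=1}^N p^k\nu^k$ with $N$ finite, each $\nu^k$ Gaussian, and $p=(p^1,\dots,p^N)$ a probability vector. For mixtures $\mu_0=\sum_i p_0^i\nu_0^i$, $\mu_1=\sum_j p_1^j\nu_1^j$, $\Pi(p_0,p_1)$ is the set of nonnegative matrices $\pi$ with row sums $p_0^i$ and column sums $p_1^j$, and $d(\mu_0,\mu_1)=\sqrt{\min_{\pi\in\Pi(p_0,p_1)}\sum_{i,j}W_2(\nu_0^i,\nu_1^j)^2\pi(i,j)}$; $d(\mu_s,\mu_t)$ is defined in the same way using the mixture representations $\mu_s=\sum_{i,j}\pi^*(i,j)\nu_s^{ij}$ and $\mu_t=\sum_{i,j}\pi^*(i,j)\nu_t^{ij}$. *)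

theory Defs
  imports "HOL-Analysis.Analysis"
begin

definition sym_mat :: "real^'n^'n \<Rightarrow> bool" where
  "sym_mat A \<longleftrightarrow> transpose A = A"

definition pos_def :: "real^'n^'n \<Rightarrow> bool" where
  "pos_def A \<longleftrightarrow> sym_mat A \<and> (\<forall>x. x \<noteq> 0 \<longrightarrow> x \<bullet> (A *v x) > 0)"

definition pos_semidef :: "real^'n^'n \<Rightarrow> bool" where
  "pos_semidef A \<longleftrightarrow> sym_mat A \<and> (\<forall>x. x \<bullet> (A *v x) \<ge> 0)"

definition msqrt :: "real^'n^'n \<Rightarrow> real^'n^'n" where
  "msqrt A = (THE B. pos_semidef B \<and> B ** B = A)"

text \<open>Squared 2-Wasserstein distance between N(m0,S0) and N(m1,S1).\<close>
definition W2sq :: "real^'n \<Rightarrow> real^'n^'n \<Rightarrow> real^'n \<Rightarrow> real^'n^'n \<Rightarrow> real" where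
  "W2sq m0 S0 m1 S1 =
     (norm (m0 - m1))\<^sup>2 + trace (S0 + S1 - 2 *\<^sub>R msqrt (msqrt S0 ** S1 ** msqrt S0))"

text \<open>Displacement interpolation of Gaussians: mean and covariance at time t.\<close>
definition interp_mean :: "real^'n \<Rightarrow> real^'n \<Rightarrow> real \<Rightarrow> real^'n" where
  "interp_mean m0 m1 t = (1 - t) *\<^sub>R m0 + t *\<^sub>R m1"

definition interp_cov :: "real^'n^'n \<Rightarrow> real^'n^'n \<Rightarrow> real \<Rightarrow> real^'n^'n" where
  "interp_cov S0 S1 t =
     (let R = msqrt S0; Ri = matrix_inv R;
          M = (1 - t) *\<^sub>R S0 + t *\<^sub>R msqrt (R ** S1 ** R)
      in Ri ** M ** M ** Ri)"

text \<open>A Gaussian mixture representation: finite index set I, weights p,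
  means m, covariances S.\<close>
definition gaussian_mixture ::
  "'i set \<Rightarrow> ('i \<Rightarrow> real) \<Rightarrow> ('i \<Rightarrow> real^'n) \<Rightarrow> ('i \<Rightarrow> real^'n^'n) \<Rightarrow> bool" where
  "gaussian_mixture I p m S \<longleftrightarrow>
     finite I \<and> (\<forall>i\<in>I. 0 \<le> p i) \<and> sum p I = 1 \<and> (\<forall>i\<in>I. pos_def (S i))"

definition couplings ::
  "'i set \<Rightarrow> 'j set \<Rightarrow> ('i \<Rightarrow> real) \<Rightarrow> ('j \<Rightarrow> real) \<Rightarrow> ('i \<Rightarrow> 'j \<Rightarrow> real) set" where
  "couplings I J p q =
     {\<pi>. (\<forall>i\<in>I. \<forall>j\<in>J. 0 \<le> \<pi> i j) \<and>
          (\<forall>i\<in>I. (\<Sum>j\<in>J. \<pi> i j) = p i) \<and>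
          (\<forall>j\<in>J. (\<Sum>i\<in>I. \<pi> i j) = q j)}"

definition mix_cost ::
  "'i set \<Rightarrow> ('i \<Rightarrow> real^'n) \<Rightarrow> ('i \<Rightarrow> real^'n^'n) \<Rightarrow>
   'j set \<Rightarrow> ('j \<Rightarrow> real^'n) \<Rightarrow> ('j \<Rightarrow> real^'n^'n) \<Rightarrow> ('i \<Rightarrow> 'j \<Rightarrow> real) \<Rightarrow> real" where
  "mix_cost I m S J m' S' \<pi> = (\<Sum>i\<in>I. \<Sum>j\<in>J. W2sq (m i) (S i) (m' j) (S' j) * \<pi> i j)"

text \<open>The distance d between two mixture representations (the minimum over
  couplings, which is attained, written as an infimum).\<close>
definition mix_dist ::
  "'i set \<Rightarrow> ('i \<Rightarrow> real) \<Rightarrow> ('i \<Rightarrow> real^'n) \<Rightarrow> ('i \<Rightarrow> real^'n^'n) \<Rightarrow>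
   'j set \<Rightarrow> ('j \<Rightarrow> real) \<Rightarrow> ('j \<Rightarrow> real^'n) \<Rightarrow> ('j \<Rightarrow> real^'n^'n) \<Rightarrow> real" where
  "mix_dist I p m S J q m' S' =
     sqrt (Inf (mix_cost I m S J m' S' ` couplings I J p q))"

end

theory Submission
  imports Defs
begin


lemma sym_dot:
  fixes A :: "real^'n^'n"
  assumes "sym_mat A"
  shows "x \<bullet> (A *v y) = (A *v x) \<bullet> y"
proof -
  have "x \<bullet> (A *v y) = (x v* A) \<bullet> y" by (simp add: dot_lmul_matrix)
  also have "x v* A = transpose A *v x" by simp
  also have "transpose A = A" using assms by (simp add: sym_mat_def)
  finally show ?thesis .
qed

lemma sym_eigvec_subspace:
  fixes A :: "real^'n^'n"
  assumes sym: "sym_mat A" and V: "subspace V" and inv: "\<forall>x\<in>V. A *v x \<in> V"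
    and ne: "V \<noteq> {0}"
  shows "\<exists>x\<in>V. norm x = 1 \<and> A *v x = (x \<bullet> (A *v x)) *\<^sub>R x"
proof -
  let ?K = "V \<inter> sphere 0 1"
  have cK: "compact ?K"
    using closed_Int_compact[OF closed_subspace[OF V] compact_sphere] by simp
  obtain v where v: "v \<in> V" "v \<noteq> 0" using ne V subspace_0 by blast
  have "v /\<^sub>R norm v \<in> ?K" using v V by (simp add: subspace_scale)
  then have neK: "?K \<noteq> {}" by blast
  have cont: "continuous_on ?K (\<lambda>x. x \<bullet> (A *v x))"
    by (intro continuous_intros)
  obtain x where x: "x \<in> ?K" and xmax: "\<And>y. y \<in> ?K \<Longrightarrow> y \<bullet> (A *v y) \<le> x \<bullet> (A *v x)"
    using continuous_attains_sup[OF cK neK cont] by blast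
  define l where "l = x \<bullet> (A *v x)"
  have xV: "x \<in> V" and nx: "norm x = 1" using x by auto
  have bound: "y \<bullet> (A *v y) \<le> l * (y \<bullet> y)" if "y \<in> V" for y
  proof (cases "y = 0")
    case True then show ?thesis by simp
  next
    case False
    let ?u = "y /\<^sub>R norm y"
    have "?u \<in> ?K" using that False V by (simp add: subspace_scale)
    then have "?u \<bullet> (A *v ?u) \<le> l" using xmax l_def by blast
    moreover have "?u \<bullet> (A *v ?u) = (y \<bullet> (A *v y)) / (norm y)^2"
      by (simp add: matrix_vector_mult_scaleR power2_eq_square field_simps)
    moreover have "(norm y)^2 > 0" using False by simp
    ultimately have "y \<bullet> (A *v y) \<le> l * (norm y)^2" by (simp add: divide_le_eq)
    then show ?thesis by (simp add: power2_norm_eq_inner)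
  qed
  have orth: "y \<bullet> (A *v x) = 0" if yV: "y \<in> V" and yx: "y \<bullet> x = 0" for y
  proof -
    define c where "c = y \<bullet> (A *v x)"
    define d where "d = y \<bullet> (A *v y) - l * (y \<bullet> y)"
    have d: "d \<le> 0" using bound[OF yV] d_def by simp
    have key: "2 * e * c + e^2 * d \<le> 0" for e
    proof -
      have "x + e *\<^sub>R y \<in> V" using xV yV V by (simp add: subspace_add subspace_scale)
      from bound[OF this] have
        "(x + e *\<^sub>R y) \<bullet> (A *v (x + e *\<^sub>R y)) \<le> l * ((x + e *\<^sub>R y) \<bullet> (x + e *\<^sub>R y))" .
      moreover have "(x + e *\<^sub>R y) \<bullet> (A *v (x + e *\<^sub>R y)) = l + 2 * e * c + e^2 * (y \<bullet> (A *v y))"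
        using sym_dot[OF sym, of x y]
        by (simp add: l_def c_def matrix_vector_right_distrib matrix_vector_mult_scaleR
            inner_add_left inner_add_right power2_eq_square algebra_simps inner_commute)
      moreover have "(x + e *\<^sub>R y) \<bullet> (x + e *\<^sub>R y) = 1 + e^2 * (y \<bullet> y)"
        using nx yx
        by (simp add: inner_add_left inner_add_right power2_eq_square algebra_simps inner_commute
             norm_eq_1)
      ultimately have "l + 2 * e * c + e^2 * (y \<bullet> (A *v y)) \<le> l * (1 + e^2 * (y \<bullet> y))"
        by metis
      then show ?thesis by (simp add: d_def algebra_simps)
    qed
    have d1: "1 - d > 0" using d by simp
    have "2 * (c / (1 - d)) * c + (c / (1 - d))^2 * d \<le> 0" by (rule key)
    moreover have "2 * (c / (1 - d)) * c + (c / (1 - d))^2 * d = (c^2 * (2 - d)) / (1 - d)^2"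
      using d1 by (simp add: power_divide, simp add: divide_simps power2_eq_square, algebra)
    ultimately have "(c^2 * (2 - d)) / (1 - d)^2 \<le> 0" by simp
    then have "c^2 * (2 - d) \<le> 0" using d1 by (simp add: divide_le_0_iff)
    moreover have "2 - d > 0" using d by simp
    ultimately have "c^2 \<le> 0" by (simp add: mult_le_0_iff)
    then show ?thesis using c_def by simp
  qed
  define w where "w = A *v x - l *\<^sub>R x"
  have wV: "w \<in> V" using inv xV V by (simp add: w_def subspace_diff subspace_scale)
  have "w \<bullet> x = 0"
    using nx by (simp add: w_def l_def inner_diff_left inner_diff_right inner_commute norm_eq_1)
  then have "w \<bullet> (A *v x) = 0" using orth wV by blast
  then have "w \<bullet> w = 0" using \<open>w \<bullet> x = 0\<close> by (simp add: w_def inner_diff_right)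
  then have "w = 0" by simp
  then show ?thesis using xV nx by (auto simp: w_def l_def)
qed

lemma spectral_subspace:
  fixes A :: "real^'n^'n"
  assumes sym: "sym_mat A"
  shows "subspace V \<Longrightarrow> (\<forall>x\<in>V. A *v x \<in> V) \<Longrightarrow>
    \<exists>B. B \<subseteq> V \<and> finite B \<and> pairwise orthogonal B \<and>
        (\<forall>b\<in>B. norm b = 1 \<and> A *v b = (b \<bullet> (A *v b)) *\<^sub>R b) \<and> V \<subseteq> span B"
proof (induction "dim V" arbitrary: V rule: less_induct)
  case less
  show ?case
  proof (cases "V = {0}")
    case True
    then show ?thesis by (intro exI[of _ "{}"]) auto
  next
    case False
    obtain x where xV: "x \<in> V" and nx: "norm x = 1" and ex: "A *v x = (x \<bullet> (A *v x)) *\<^sub>R x"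
      using sym_eigvec_subspace[OF sym less.prems(1) less.prems(2) False] by blast
    define V' where "V' = V \<inter> {y. x \<bullet> y = 0}"
    have sV': "subspace V'" unfolding V'_def
      by (intro subspace_inter less.prems(1) subspace_hyperplane)
    have iV': "\<forall>y\<in>V'. A *v y \<in> V'"
    proof
      fix y assume y: "y \<in> V'"
      have "x \<bullet> (A *v y) = (A *v x) \<bullet> y" by (rule sym_dot[OF sym])
      also have "\<dots> = 0" using y by (subst ex) (simp add: V'_def)
      finally show "A *v y \<in> V'" using y less.prems(2) by (simp add: V'_def)
    qed
    have xx: "x \<bullet> x = 1" using nx by (simp add: norm_eq_1)
    have "V' \<subset> V" using xV xx by (auto simp: V'_def) (metis (mono_tags, lifting) Int_iff mem_Collect_eq zero_neq_one)
    then have "span V' \<subset> span V"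
      using sV' less.prems(1) by (metis span_eq_iff)
    then have "dim V' < dim V" by (rule dim_psubset)
    from less.hyps[OF this sV' iV'] obtain B where
      B: "B \<subseteq> V'" "finite B" "pairwise orthogonal B"
         "\<forall>b\<in>B. norm b = 1 \<and> A *v b = (b \<bullet> (A *v b)) *\<^sub>R b" "V' \<subseteq> span B"
      by blast
    have xB: "x \<notin> B" using B(1) xx by (auto simp: V'_def)
    show ?thesis
    proof (intro exI[of _ "insert x B"] conjI)
      show "insert x B \<subseteq> V" using B(1) xV by (auto simp: V'_def)
      show "finite (insert x B)" using B(2) by simp
      show "pairwise orthogonal (insert x B)"
        using B(1,3) unfolding pairwise_insert
        by (auto simp: V'_def orthogonal_def inner_commute)
      show "\<forall>b\<in>insert x B. norm b = 1 \<and> A *v b = (b \<bullet> (A *v b)) *\<^sub>R b"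
        using B(4) nx ex by auto
      show "V \<subseteq> span (insert x B)"
      proof
        fix v assume v: "v \<in> V"
        have "v - (x \<bullet> v) *\<^sub>R x \<in> V'"
          using v xV less.prems(1) xx
          by (simp add: V'_def subspace_diff subspace_scale inner_diff_right)
        then have "v - (x \<bullet> v) *\<^sub>R x \<in> span (insert x B)"
          using B(5) span_mono[of B "insert x B"] by auto
        moreover have "(x \<bullet> v) *\<^sub>R x \<in> span (insert x B)"
          by (simp add: span_base span_scale)
        ultimately have "(v - (x \<bullet> v) *\<^sub>R x) + (x \<bullet> v) *\<^sub>R x \<in> span (insert x B)"
          by (rule span_add)
        then show "v \<in> span (insert x B)" by simp
      qed
    qed
  qed
qed



lemma quad_trick:
  fixes a b :: real
  assumes "\<And>e. 0 \<le> a * e + b * e^2"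
  shows "a = 0"
proof (rule ccontr)
  assume a: "a \<noteq> 0"
  define e where "e = - a / (\<bar>b\<bar> + 1)"
  have p: "\<bar>b\<bar> + 1 > 0" by simp
  have "0 \<le> a * e + b * e^2" by (rule assms)
  also have "a * e + b * e^2 = a^2 * (b - (\<bar>b\<bar> + 1)) / (\<bar>b\<bar> + 1)^2"
    using p unfolding e_def by (simp add: power_divide, simp add: divide_simps power2_eq_square, algebra)
  finally have "0 \<le> a^2 * (b - (\<bar>b\<bar> + 1))" using p by (simp add: zero_le_divide_iff)
  moreover have "a^2 > 0" using a by simp
  moreover have "b - (\<bar>b\<bar> + 1) < 0" by simp
  ultimately show False by (simp add: mult_pos_neg zero_le_mult_iff)
qed

lemma spectral_UNIV:
  fixes A :: "real^'n^'n"
  assumes sym: "sym_mat A"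
  shows "\<exists>B. finite B \<and> pairwise orthogonal B \<and>
        (\<forall>b\<in>B. norm b = 1 \<and> A *v b = (b \<bullet> (A *v b)) *\<^sub>R b) \<and>
        (\<forall>y. (\<Sum>b\<in>B. (y \<bullet> b) *\<^sub>R b) = y)"
proof -
  obtain B where B: "finite B" "pairwise orthogonal B"
    "\<forall>b\<in>B. norm b = 1 \<and> A *v b = (b \<bullet> (A *v b)) *\<^sub>R b" "UNIV \<subseteq> span B"
    using spectral_subspace[OF sym, of UNIV] by auto
  have "(\<Sum>b\<in>B. (y \<bullet> b) *\<^sub>R b) = y" for y
    using B by (intro orthonormal_basis_expand) auto
  then show ?thesis using B by blast
qed

lemma orthonormal_inner:
  assumes "pairwise orthogonal B" "\<forall>b\<in>B. norm b = 1" "b \<in> B" "c \<in> B"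
  shows "b \<bullet> c = (if b = c then 1 else 0)"
  using assms by (auto simp: pairwise_def orthogonal_def norm_eq_1)

definition omat :: "(real^'n) set \<Rightarrow> (real^'n \<Rightarrow> real) \<Rightarrow> real^'n^'n" where
  "omat B f = (\<chi> i j. \<Sum>b\<in>B. f b * (b $ i) * (b $ j))"

lemma omat_mult: "omat B f *v y = (\<Sum>b\<in>B. (f b * (b \<bullet> y)) *\<^sub>R b)"
  by (simp add: omat_def vec_eq_iff matrix_vector_mult_def inner_vec_def sum_distrib_left
      sum_distrib_right sum_component algebra_simps) (subst sum.swap, simp add: algebra_simps)

lemma omat_sym: "sym_mat (omat B f)"
  by (simp add: sym_mat_def omat_def transpose_def vec_eq_iff algebra_simps)

lemma omat_inner:
  assumes "finite B" "pairwise orthogonal B" "\<forall>b\<in>B. norm b = 1" "c \<in> B"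
  shows "c \<bullet> (omat B f *v y) = f c * (c \<bullet> y)"
proof -
  have "c \<bullet> (omat B f *v y) = (\<Sum>b\<in>B. (f b * (b \<bullet> y)) * (c \<bullet> b))"
    by (simp add: omat_mult inner_sum_right)
  also have "\<dots> = (\<Sum>b\<in>B. if b = c then f b * (b \<bullet> y) else 0)"
    using orthonormal_inner[OF assms(2,3) assms(4)]
    by (intro sum.cong) auto
  also have "\<dots> = f c * (c \<bullet> y)" using assms(1,4) by simp
  finally show ?thesis .
qed

lemma psd_quad_zero:
  fixes M :: "real^'n^'n"
  assumes "pos_semidef M" "y \<bullet> (M *v y) = 0"
  shows "M *v y = 0"
proof -
  have sym: "sym_mat M" and ge: "\<And>x. x \<bullet> (M *v x) \<ge> 0" using assms(1) by (auto simp: pos_semidef_def)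
  have "z \<bullet> (M *v y) = 0" for z
  proof -
    have "0 \<le> (2 * (z \<bullet> (M *v y))) * e + (z \<bullet> (M *v z)) * e^2" for e
    proof -
      have "0 \<le> (y + e *\<^sub>R z) \<bullet> (M *v (y + e *\<^sub>R z))" by (rule ge)
      also have "\<dots> = (2 * (z \<bullet> (M *v y))) * e + (z \<bullet> (M *v z)) * e^2"
        using sym_dot[OF sym, of y z] assms(2)
        by (simp add: matrix_vector_right_distrib matrix_vector_mult_scaleR
            inner_add_left inner_add_right power2_eq_square algebra_simps inner_commute)
      finally show ?thesis .
    qed
    then have "2 * (z \<bullet> (M *v y)) = 0" by (rule quad_trick)
    then show ?thesis by simp
  qed
  from this[of "M *v y"] show ?thesis by simp
qed

lemma psd_sqrt_exists:
  fixes A :: "real^'n^'n"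
  assumes "pos_semidef A"
  shows "\<exists>Q. pos_semidef Q \<and> Q ** Q = A"
proof -
  have sym: "sym_mat A" using assms by (simp add: pos_semidef_def)
  obtain B where B: "finite B" "pairwise orthogonal B"
    "\<forall>b\<in>B. norm b = 1" "\<forall>b\<in>B. A *v b = (b \<bullet> (A *v b)) *\<^sub>R b"
    "\<forall>y. (\<Sum>b\<in>B. (y \<bullet> b) *\<^sub>R b) = y"
    using spectral_UNIV[OF sym] by blast
  define l where "l b = b \<bullet> (A *v b)" for b
  have l0: "l b \<ge> 0" for b using assms by (simp add: l_def pos_semidef_def)
  define Q where "Q = omat B (\<lambda>b. sqrt (l b))"
  have psd: "pos_semidef Q"
    unfolding pos_semidef_def
  proof (intro conjI allI)
    show "sym_mat Q" by (simp add: Q_def omat_sym)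
    fix y
    have "y \<bullet> (Q *v y) = (\<Sum>b\<in>B. sqrt (l b) * (b \<bullet> y) * (y \<bullet> b))"
      by (simp add: Q_def omat_mult inner_sum_right)
    also have "\<dots> = (\<Sum>b\<in>B. sqrt (l b) * (b \<bullet> y)^2)"
      by (simp add: power2_eq_square inner_commute mult.assoc)
    also have "\<dots> \<ge> 0" using l0 by (intro sum_nonneg) simp
    finally show "y \<bullet> (Q *v y) \<ge> 0" .
  qed
  have "Q ** Q = A"
  proof (subst matrix_eq, intro allI)
    fix y
    have "(Q ** Q) *v y = Q *v (Q *v y)" by (simp add: matrix_vector_mul_assoc)
    also have "\<dots> = (\<Sum>b\<in>B. (sqrt (l b) * (b \<bullet> (Q *v y))) *\<^sub>R b)"
      by (simp add: Q_def omat_mult)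
    also have "\<dots> = (\<Sum>b\<in>B. (l b * (y \<bullet> b)) *\<^sub>R b)"
    proof (intro sum.cong refl)
      fix b assume b: "b \<in> B"
      have "b \<bullet> (Q *v y) = sqrt (l b) * (b \<bullet> y)"
        unfolding Q_def using B b by (intro omat_inner) auto
      then show "(sqrt (l b) * (b \<bullet> (Q *v y))) *\<^sub>R b = (l b * (y \<bullet> b)) *\<^sub>R b"
        using l0[of b] by (simp add: inner_commute mult.assoc[symmetric])
    qed
    also have "\<dots> = (\<Sum>b\<in>B. (y \<bullet> b) *\<^sub>R (A *v b))"
    proof (intro sum.cong refl)
      fix b assume "b \<in> B"
      then have "A *v b = l b *\<^sub>R b" using B(4) by (simp add: l_def)
      then show "(l b * (y \<bullet> b)) *\<^sub>R b = (y \<bullet> b) *\<^sub>R (A *v b)" by (simp add: mult.commute)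
    qed
    also have "\<dots> = A *v (\<Sum>b\<in>B. (y \<bullet> b) *\<^sub>R b)"
      by (simp add: matrix_vector_mult_scaleR linear_sum[OF matrix_vector_mul_linear])
    also have "\<dots> = A *v y" using B(5) by simp
    finally show "(Q ** Q) *v y = A *v y" .
  qed
  with psd show ?thesis by blast
qed



lemma mm_diff_l: "(A::real^'n^'n) ** (B - C) = A ** B - A ** C"
  by (simp add: matrix_matrix_mult_def vec_eq_iff algebra_simps sum_subtractf)
lemma mm_diff_r: "((A::real^'n^'n) - B) ** C = A ** C - B ** C"
  by (simp add: matrix_matrix_mult_def vec_eq_iff algebra_simps sum_subtractf)
lemma mm_add_r: "((A::real^'n^'n) + B) ** C = A ** C + B ** C"
  by (simp add: matrix_matrix_mult_def vec_eq_iff algebra_simps sum.distrib)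
lemma mm_add_l: "(A::real^'n^'n) ** (B + C) = A ** B + A ** C"
  by (simp add: matrix_matrix_mult_def vec_eq_iff algebra_simps sum.distrib)
lemma mm_scale_l: "(c *\<^sub>R (A::real^'n^'n)) ** B = c *\<^sub>R (A ** B)"
  by (simp add: matrix_matrix_mult_def vec_eq_iff algebra_simps sum_distrib_left)
lemma mm_scale_r: "(A::real^'n^'n) ** (c *\<^sub>R B) = c *\<^sub>R (A ** B)"
  by (simp add: matrix_matrix_mult_def vec_eq_iff algebra_simps sum_distrib_left)

lemma psd_sqrt_unique:
  fixes B C :: "real^'n^'n"
  assumes B: "pos_semidef B" and C: "pos_semidef C" and eq: "B ** B = C ** C"
  shows "B = C"
proof -
  define D where "D = B - C"
  have symB: "sym_mat B" and symC: "sym_mat C" using B C by (auto simp: pos_semidef_def)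
  have symD: "sym_mat D" using symB symC
    by (simp add: sym_mat_def D_def transpose_def vec_eq_iff)
  have BD: "B ** D + D ** C = 0"
    using eq by (simp add: D_def mm_diff_l mm_diff_r)
  obtain E where E: "finite E" "pairwise orthogonal E"
    "\<forall>b\<in>E. norm b = 1 \<and> D *v b = (b \<bullet> (D *v b)) *\<^sub>R b" "\<forall>y. (\<Sum>b\<in>E. (y \<bullet> b) *\<^sub>R b) = y"
    using spectral_UNIV[OF symD] by blast
  have Db: "D *v b = 0" if b: "b \<in> E" for b
  proof -
    define \<mu> where "\<mu> = b \<bullet> (D *v b)"
    have ev: "D *v b = \<mu> *\<^sub>R b" and nb: "b \<bullet> b = 1" using E(3) b by (auto simp: \<mu>_def norm_eq_1)
    have "b \<bullet> ((B ** D + D ** C) *v b) = 0" using BD by simp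
    moreover have "b \<bullet> ((B ** D + D ** C) *v b) = \<mu> * (b \<bullet> (B *v b)) + \<mu> * (b \<bullet> (C *v b))"
    proof -
      have "b \<bullet> ((B ** D) *v b) = \<mu> * (b \<bullet> (B *v b))"
        by (simp add: matrix_vector_mul_assoc[symmetric] ev matrix_vector_mult_scaleR)
      moreover have "b \<bullet> ((D ** C) *v b) = (D *v b) \<bullet> (C *v b)"
        by (simp add: matrix_vector_mul_assoc[symmetric] sym_dot[OF symD])
      ultimately show ?thesis by (simp add: matrix_vector_mult_add_rdistrib inner_add_right ev)
    qed
    ultimately have "\<mu> = 0 \<or> (b \<bullet> (B *v b)) + (b \<bullet> (C *v b)) = 0"
      by (simp add: distrib_left[symmetric])
    then show ?thesis
    proof
      assume "\<mu> = 0" then show ?thesis using ev by simp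
    next
      assume "(b \<bullet> (B *v b)) + (b \<bullet> (C *v b)) = 0"
      moreover have "b \<bullet> (B *v b) \<ge> 0" "b \<bullet> (C *v b) \<ge> 0" using B C by (auto simp: pos_semidef_def)
      ultimately have "b \<bullet> (B *v b) = 0" "b \<bullet> (C *v b) = 0" by linarith+
      then have "B *v b = 0" "C *v b = 0" using psd_quad_zero B C by blast+
      then show ?thesis by (simp add: D_def matrix_vector_mult_diff_rdistrib)
    qed
  qed
  have "D *v y = 0" for y
  proof -
    have "D *v y = D *v (\<Sum>b\<in>E. (y \<bullet> b) *\<^sub>R b)" using E(4) by simp
    also have "\<dots> = (\<Sum>b\<in>E. (y \<bullet> b) *\<^sub>R (D *v b))"
      by (simp add: matrix_vector_mult_scaleR linear_sum[OF matrix_vector_mul_linear])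
    also have "\<dots> = 0" using Db by simp
    finally show ?thesis .
  qed
  then have "D = 0" by (simp add: matrix_eq)
  then show ?thesis by (simp add: D_def)
qed

lemma msqrt:
  fixes A :: "real^'n^'n"
  assumes "pos_semidef A"
  shows "pos_semidef (msqrt A)" "msqrt A ** msqrt A = A"
proof -
  have "\<exists>!Q. pos_semidef Q \<and> Q ** Q = A"
    using psd_sqrt_exists[OF assms] psd_sqrt_unique by metis
  then have "pos_semidef (msqrt A) \<and> msqrt A ** msqrt A = A"
    unfolding msqrt_def by (rule theI')
  then show "pos_semidef (msqrt A)" "msqrt A ** msqrt A = A" by auto
qed

lemma msqrt_unique:
  fixes A Q :: "real^'n^'n"
  assumes "pos_semidef Q" "Q ** Q = A"
  shows "msqrt A = Q"
proof -
  have A: "pos_semidef A"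
  proof -
    have "sym_mat A" using assms
      by (simp add: pos_semidef_def sym_mat_def matrix_transpose_mul[symmetric] del: matrix_transpose_mul)
           (metis matrix_transpose_mul)
    moreover have "x \<bullet> (A *v x) \<ge> 0" for x
    proof -
      have "x \<bullet> (A *v x) = (Q *v x) \<bullet> (Q *v x)"
        using assms sym_dot[of Q x "Q *v x"] by (auto simp: pos_semidef_def matrix_vector_mul_assoc)
      then show ?thesis by simp
    qed
    ultimately show ?thesis by (simp add: pos_semidef_def)
  qed
  show ?thesis using msqrt[OF A] psd_sqrt_unique assms by metis
qed



lemma inner_trace: "inner (X::real^'n^'n) Y = trace (transpose X ** Y)"
  by (simp add: inner_vec_def trace_def transpose_def matrix_matrix_mult_def) (subst sum.swap, rule refl)

lemma norm_sq_trace: "(norm (X::real^'n^'n))^2 = trace (transpose X ** X)"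
  by (simp add: power2_norm_eq_inner inner_trace)

lemma trace_transpose: "trace (transpose (X::real^'n^'n)) = trace X"
  by (simp add: trace_def transpose_def)

lemma trace_scaleR: "trace (c *\<^sub>R (X::real^'n^'n)) = c * trace X"
  by (simp add: trace_def sum_distrib_left)

lemma transpose_add: "transpose ((A::real^'n^'n) + B) = transpose A + transpose B"
  by (simp add: transpose_def vec_eq_iff)
lemma transpose_diff: "transpose ((A::real^'n^'n) - B) = transpose A - transpose B"
  by (simp add: transpose_def vec_eq_iff)

lemma pd_psd: "pos_def S \<Longrightarrow> pos_semidef S"
  unfolding pos_def_def pos_semidef_def
  by (metis inner_zero_left order.refl less_imp_le)

lemma sym_transpose: "sym_mat A \<Longrightarrow> transpose A = A"
  by (simp add: sym_mat_def)

lemma ker_invertible: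
  fixes A :: "real^'n^'n"
  assumes "\<And>x. A *v x = 0 \<Longrightarrow> x = 0"
  shows "invertible A"
  using assms matrix_left_invertible_ker invertible_left_inverse by metis

lemma pd_invertible: "pos_def (A::real^'n^'n) \<Longrightarrow> invertible A"
  by (rule ker_invertible) (auto simp: pos_def_def)

lemma matrix_inv:
  fixes A :: "real^'n^'n"
  assumes "invertible A"
  shows "A ** matrix_inv A = mat 1" "matrix_inv A ** A = mat 1"
proof -
  have "A ** matrix_inv A = mat 1 \<and> matrix_inv A ** A = mat 1"
    using assms unfolding invertible_def matrix_inv_def by (rule someI_ex)
  then show "A ** matrix_inv A = mat 1" "matrix_inv A ** A = mat 1" by auto
qed

lemma inv_unique:
  fixes A B :: "real^'n^'n"
  assumes "invertible A" "B ** A = mat 1"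
  shows "B = matrix_inv A"
proof -
  have "B = B ** (A ** matrix_inv A)" using matrix_inv(1)[OF assms(1)] by simp
  also have "\<dots> = matrix_inv A" by (simp add: matrix_mul_assoc assms(2))
  finally show ?thesis .
qed

lemma sym_inv:
  fixes R :: "real^'n^'n"
  assumes "sym_mat R" "invertible R"
  shows "sym_mat (matrix_inv R)"
proof -
  have "transpose (matrix_inv R) ** R = mat 1"
    using matrix_inv(1)[OF assms(2)] assms(1)
    by (metis matrix_transpose_mul sym_transpose transpose_mat)
  then have "transpose (matrix_inv R) = matrix_inv R" by (rule inv_unique[OF assms(2)])
  then show ?thesis by (simp add: sym_mat_def)
qed

lemma invertible_AAt_pd:
  fixes A :: "real^'n^'n"
  assumes "invertible A"
  shows "pos_def (A ** transpose A)"
  unfolding pos_def_def sym_mat_def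
proof (intro conjI allI impI)
  show "transpose (A ** transpose A) = A ** transpose A" by (simp add: matrix_transpose_mul)
  fix x :: "real^'n" assume x: "x \<noteq> 0"
  have "x \<bullet> ((A ** transpose A) *v x) = (transpose A *v x) \<bullet> (transpose A *v x)"
    by (simp add: matrix_vector_mul_assoc[symmetric] dot_lmul_matrix[symmetric])
  moreover have "transpose A *v x \<noteq> 0"
    using inj_matrix_vector_mult[OF transpose_invertible[OF assms]] x
    by (metis injD matrix_vector_mult_0_right)
  ultimately show "x \<bullet> ((A ** transpose A) *v x) > 0" by simp
qed

lemma msqrt_pd:
  fixes S :: "real^'n^'n"
  assumes "pos_def S"
  shows "pos_def (msqrt S)" "sym_mat (msqrt S)" "msqrt S ** msqrt S = S" "invertible (msqrt S)"
proof -
  note m = msqrt[OF pd_psd[OF assms]]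
  show sym: "sym_mat (msqrt S)" using m by (simp add: pos_semidef_def)
  show sq: "msqrt S ** msqrt S = S" using m by simp
  have ker: "x = 0" if "msqrt S *v x = 0" for x
  proof (rule ccontr)
    assume "x \<noteq> 0"
    then have "x \<bullet> (S *v x) > 0" using assms by (simp add: pos_def_def)
    moreover have "S *v x = 0" using that sq by (metis matrix_vector_mul_assoc matrix_vector_mult_0_right)
    ultimately show False by simp
  qed
  show pd: "pos_def (msqrt S)"
    unfolding pos_def_def
  proof (intro conjI allI impI)
    show "sym_mat (msqrt S)" by (rule sym)
    fix x :: "real^'n" assume x: "x \<noteq> 0"
    have "x \<bullet> (msqrt S *v x) \<ge> 0" using m by (simp add: pos_semidef_def)
    moreover have "x \<bullet> (msqrt S *v x) \<noteq> 0"
      using psd_quad_zero[OF m(1), of x] ker x by auto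
    ultimately show "x \<bullet> (msqrt S *v x) > 0" by simp
  qed
  show "invertible (msqrt S)" using ker by (rule ker_invertible)
qed



lemma trace_orth_le:
  fixes K Ob :: "real^'n^'n"
  assumes K: "pos_semidef K" and Ob: "Ob ** transpose Ob = mat 1"
  shows "trace (K ** Ob) \<le> trace K"
proof -
  define G where "G = msqrt K"
  have Gs: "transpose G = G" and GG: "G ** G = K"
    using msqrt[OF K] by (auto simp: G_def pos_semidef_def sym_mat_def)
  have "trace (K ** Ob) = trace (transpose G ** (G ** Ob))"
    by (simp add: Gs GG[symmetric] matrix_mul_assoc)
  also have "\<dots> = inner G (G ** Ob)" by (simp add: inner_trace)
  also have "\<dots> \<le> norm G * norm (G ** Ob)" by (rule norm_cauchy_schwarz)
  also have "norm (G ** Ob) = norm G"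
  proof -
    have "(norm (G ** Ob))^2 = trace (transpose Ob ** (transpose G ** G ** Ob))"
      by (simp add: norm_sq_trace matrix_transpose_mul matrix_mul_assoc)
    also have "\<dots> = trace ((transpose G ** G ** Ob) ** transpose Ob)" by (rule trace_mul_sym)
    also have "\<dots> = trace (transpose G ** G)" by (simp add: matrix_mul_assoc[symmetric] Ob)
    also have "\<dots> = (norm G)^2" by (simp add: norm_sq_trace)
    finally show ?thesis by simp
  qed
  also have "norm G * norm G = trace K"
    using norm_sq_trace[of G] by (simp add: power2_eq_square Gs GG)
  finally show ?thesis .
qed

lemma orth_sym:
  fixes U :: "real^'n^'n"
  assumes "U ** transpose U = mat 1"
  shows "transpose U ** U = mat 1"
  using assms matrix_left_right_inverse by blast

lemma key_ineq:
  fixes Sa Sb A B :: "real^'n^'n"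
  assumes Sa: "pos_def Sa" and Sb: "pos_def Sb"
    and A: "A ** transpose A = Sa" and B: "B ** transpose B = Sb"
  shows "trace (transpose A ** B) \<le> trace (msqrt (msqrt Sa ** Sb ** msqrt Sa))"
proof -
  define R where "R = msqrt Sa"
  define Ri where "Ri = matrix_inv R"
  note Rp = msqrt_pd[OF Sa, folded R_def]
  have RRi: "R ** Ri = mat 1" "Ri ** R = mat 1" using matrix_inv[OF Rp(4)] by (auto simp: Ri_def)
  have Rt: "transpose R = R" using Rp(2) by (simp add: sym_mat_def)
  have Rit: "transpose Ri = Ri" using sym_inv[OF Rp(2) Rp(4)] by (simp add: Ri_def sym_mat_def)
  define U where "U = Ri ** A"
  have UU: "U ** transpose U = mat 1"
  proof -
    have "U ** transpose U = Ri ** (A ** transpose A) ** Ri"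
      by (simp add: U_def matrix_transpose_mul Rit matrix_mul_assoc)
    also have "\<dots> = (Ri ** R) ** (R ** Ri)" by (simp add: A Rp(3)[symmetric] matrix_mul_assoc)
    finally show ?thesis by (simp add: RRi)
  qed
  have AU: "A = R ** U" by (simp add: U_def matrix_mul_assoc RRi)
  define M where "M = R ** B"
  define P where "P = R ** Sb ** R"
  have MM: "M ** transpose M = P"
    by (simp add: M_def P_def matrix_transpose_mul Rt matrix_mul_assoc B[symmetric])
  have Ppd: "pos_def P"
    unfolding pos_def_def
  proof (intro conjI allI impI)
    show "sym_mat P" using MM[symmetric] by (simp add: sym_mat_def matrix_transpose_mul)
    fix x :: "real^'n" assume x: "x \<noteq> 0"
    have "R *v x \<noteq> 0" using inj_matrix_vector_mult[OF Rp(4)] x by (metis injD matrix_vector_mult_0_right)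
    then have "(R *v x) \<bullet> (Sb *v (R *v x)) > 0" using Sb by (simp add: pos_def_def)
    moreover have "x \<bullet> (P *v x) = (R *v x) \<bullet> (Sb *v (R *v x))"
      using sym_dot[OF Rp(2), of x "Sb *v (R *v x)"]
      by (simp add: P_def matrix_vector_mul_assoc[symmetric])
    ultimately show "x \<bullet> (P *v x) > 0" by simp
  qed
  define K where "K = msqrt P"
  note Kp = msqrt_pd[OF Ppd, folded K_def]
  define Ki where "Ki = matrix_inv K"
  have KKi: "K ** Ki = mat 1" "Ki ** K = mat 1" using matrix_inv[OF Kp(4)] by (auto simp: Ki_def)
  have Kit: "transpose Ki = Ki" using sym_inv[OF Kp(2) Kp(4)] by (simp add: Ki_def sym_mat_def)
  define Q where "Q = Ki ** M"
  have QQ: "Q ** transpose Q = mat 1"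
  proof -
    have "Q ** transpose Q = Ki ** (M ** transpose M) ** Ki"
      by (simp add: Q_def matrix_transpose_mul Kit matrix_mul_assoc)
    also have "\<dots> = (Ki ** K) ** (K ** Ki)" by (simp add: MM Kp(3)[symmetric] matrix_mul_assoc)
    finally show ?thesis by (simp add: KKi)
  qed
  have MKQ: "M = K ** Q" by (simp add: Q_def matrix_mul_assoc KKi)
  define Ob where "Ob = Q ** transpose U"
  have OO: "Ob ** transpose Ob = mat 1"
  proof -
    have "Ob ** transpose Ob = Q ** (transpose U ** U) ** transpose Q"
      by (simp add: Ob_def matrix_transpose_mul matrix_mul_assoc)
    then show ?thesis by (simp add: orth_sym[OF UU] QQ)
  qed
  have "trace (transpose A ** B) = trace (transpose U ** M)"
    by (simp add: AU M_def matrix_transpose_mul Rt matrix_mul_assoc)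
  also have "\<dots> = trace (M ** transpose U)" by (rule trace_mul_sym)
  also have "\<dots> = trace (K ** Ob)" by (simp add: MKQ Ob_def matrix_mul_assoc)
  also have "\<dots> \<le> trace K" using trace_orth_le[OF pd_psd[OF Kp(1)] OO] .
  finally show ?thesis by (simp add: K_def P_def R_def)
qed

lemma key_eq:
  fixes Sa Sb :: "real^'n^'n"
  assumes Sa: "pos_def Sa" and Sb: "pos_def Sb"
  defines "R \<equiv> msqrt Sa"
  defines "B0 \<equiv> matrix_inv R ** msqrt (R ** Sb ** R)"
  shows "B0 ** transpose B0 = Sb" "trace (transpose R ** B0) = trace (msqrt (R ** Sb ** R))"
proof -
  define Ri where "Ri = matrix_inv R"
  note Rp = msqrt_pd[OF Sa, folded R_def]
  have RRi: "R ** Ri = mat 1" "Ri ** R = mat 1" using matrix_inv[OF Rp(4)] by (auto simp: Ri_def)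
  have Rt: "transpose R = R" using Rp(2) by (simp add: sym_mat_def)
  have Rit: "transpose Ri = Ri" using sym_inv[OF Rp(2) Rp(4)] by (simp add: Ri_def sym_mat_def)
  define P where "P = R ** Sb ** R"
  have Ppsd: "pos_semidef P"
    unfolding pos_semidef_def
  proof (intro conjI allI)
    show "sym_mat P" using Sb Rt
      by (simp add: P_def sym_mat_def matrix_transpose_mul pos_def_def matrix_mul_assoc)
    fix x :: "real^'n"
    have "x \<bullet> (P *v x) = (R *v x) \<bullet> (Sb *v (R *v x))"
      using sym_dot[OF Rp(2), of x "Sb *v (R *v x)"]
      by (simp add: P_def matrix_vector_mul_assoc[symmetric])
    moreover have "(R *v x) \<bullet> (Sb *v (R *v x)) \<ge> 0"
      using pd_psd[OF Sb] by (simp add: pos_semidef_def)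
    ultimately show "x \<bullet> (P *v x) \<ge> 0" by simp
  qed
  define K where "K = msqrt P"
  have Kt: "transpose K = K" and KK: "K ** K = P"
    using msqrt[OF Ppsd] by (auto simp: K_def pos_semidef_def sym_mat_def)
  have "B0 ** transpose B0 = Ri ** (K ** K) ** Ri"
    by (simp add: B0_def Ri_def[symmetric] K_def[symmetric] P_def[symmetric] matrix_transpose_mul
        Kt Rit matrix_mul_assoc)
  also have "\<dots> = (Ri ** R) ** Sb ** (R ** Ri)" by (simp add: KK P_def matrix_mul_assoc)
  finally show "B0 ** transpose B0 = Sb" by (simp add: RRi)
  have "transpose R ** B0 = (R ** Ri) ** K"
    by (simp add: B0_def Ri_def[symmetric] K_def[symmetric] P_def[symmetric] Rt matrix_mul_assoc)
  then show "trace (transpose R ** B0) = trace (msqrt (R ** Sb ** R))"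
    by (simp add: RRi K_def P_def)
qed



lemma norm_orth_r:
  fixes X U :: "real^'n^'n"
  assumes U: "U ** transpose U = mat 1"
  shows "norm (X ** U) = norm X"
proof -
  have "(norm (X ** U))^2 = trace (transpose U ** (transpose X ** X ** U))"
    by (simp add: norm_sq_trace matrix_transpose_mul matrix_mul_assoc)
  also have "\<dots> = trace ((transpose X ** X ** U) ** transpose U)" by (rule trace_mul_sym)
  also have "\<dots> = trace (transpose X ** X)" by (simp add: matrix_mul_assoc[symmetric] U)
  also have "\<dots> = (norm X)^2" by (simp add: norm_sq_trace)
  finally show ?thesis by simp
qed

lemma factor_orth:
  fixes Sa A :: "real^'n^'n"
  assumes Sa: "pos_def Sa" and A: "A ** transpose A = Sa"
  shows "\<exists>U. U ** transpose U = mat 1 \<and> A = msqrt Sa ** U"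
proof -
  define R where "R = msqrt Sa"
  define Ri where "Ri = matrix_inv R"
  note Rp = msqrt_pd[OF Sa, folded R_def]
  have RRi: "R ** Ri = mat 1" "Ri ** R = mat 1" using matrix_inv[OF Rp(4)] by (auto simp: Ri_def)
  have Rit: "transpose Ri = Ri" using sym_inv[OF Rp(2) Rp(4)] by (simp add: Ri_def sym_mat_def)
  define U where "U = Ri ** A"
  have UU: "U ** transpose U = mat 1"
  proof -
    have "U ** transpose U = Ri ** (A ** transpose A) ** Ri"
      by (simp add: U_def matrix_transpose_mul Rit matrix_mul_assoc)
    also have "\<dots> = (Ri ** R) ** (R ** Ri)" by (simp add: A Rp(3)[symmetric] matrix_mul_assoc)
    finally show ?thesis by (simp add: RRi)
  qed
  have AU: "A = R ** U" by (simp add: U_def matrix_mul_assoc RRi)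
  show ?thesis using UU AU by (auto simp: R_def)
qed

lemma norm_diff_sq_trace:
  fixes A B :: "real^'n^'n"
  shows "(norm (A - B))^2 = trace (A ** transpose A) + trace (B ** transpose B) - 2 * trace (transpose A ** B)"
proof -
  have "(norm (A - B))^2 = (norm A)^2 + (norm B)^2 - 2 * inner A B"
    by (simp add: power2_norm_eq_inner inner_diff_left inner_diff_right inner_commute)
  then show ?thesis
    by (simp add: norm_sq_trace inner_trace trace_mul_sym[of A "transpose A"] trace_mul_sym[of B "transpose B"])
qed

lemma W2sq_expand:
  "W2sq m Sa m' Sb = (norm (m - m'))^2 + trace Sa + trace Sb - 2 * trace (msqrt (msqrt Sa ** Sb ** msqrt Sa))"
  by (simp add: W2sq_def trace_add trace_sub trace_scaleR)

lemma W2_le: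
  fixes Sa Sb A B :: "real^'n^'n"
  assumes Sa: "pos_def Sa" and Sb: "pos_def Sb"
    and A: "A ** transpose A = Sa" and B: "B ** transpose B = Sb"
  shows "W2sq m Sa m' Sb \<le> (norm (m - m'))^2 + (norm (A - B))^2"
  using key_ineq[OF assms] by (simp add: W2sq_expand norm_diff_sq_trace A B)

lemma W2_eq:
  fixes Sa Sb A :: "real^'n^'n"
  assumes Sa: "pos_def Sa" and Sb: "pos_def Sb" and A: "A ** transpose A = Sa"
  shows "\<exists>B. B ** transpose B = Sb \<and> W2sq m Sa m' Sb = (norm (m - m'))^2 + (norm (A - B))^2"
proof -
  define R where "R = msqrt Sa"
  define B0 where "B0 = matrix_inv R ** msqrt (R ** Sb ** R)"
  note k = key_eq[OF Sa Sb, folded R_def, folded B0_def]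
  obtain U where U: "U ** transpose U = mat 1" "A = R ** U" using factor_orth[OF Sa A] R_def by blast
  note Rp = msqrt_pd[OF Sa, folded R_def]
  have Rt: "transpose R = R" using Rp(2) by (simp add: sym_mat_def)
  define B where "B = B0 ** U"
  have BB: "B ** transpose B = Sb"
    by (simp add: B_def matrix_transpose_mul matrix_mul_assoc[symmetric])
       (simp add: matrix_mul_assoc U(1) k(1))
  have "A - B = (R - B0) ** U" by (simp add: U(2) B_def mm_diff_r)
  then have "norm (A - B) = norm (R - B0)" using norm_orth_r[OF U(1)] by simp
  moreover have "(norm (R - B0))^2 = trace Sa + trace Sb - 2 * trace (msqrt (R ** Sb ** R))"
    using norm_diff_sq_trace[of R B0] k Rp(3) Rt by simp
  ultimately have "W2sq m Sa m' Sb = (norm (m - m'))^2 + (norm (A - B))^2"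
    by (simp add: W2sq_expand R_def)
  with BB show ?thesis by blast
qed

lemma W2_nonneg:
  fixes Sa Sb :: "real^'n^'n"
  assumes Sa: "pos_def Sa" and Sb: "pos_def Sb"
  shows "W2sq m Sa m' Sb \<ge> 0"
proof -
  have "msqrt Sa ** transpose (msqrt Sa) = Sa" using msqrt_pd[OF Sa] by (simp add: sym_mat_def)
  from W2_eq[OF Sa Sb this] show ?thesis by (metis add_nonneg_nonneg zero_le_power2)
qed

lemma norm_pair_sq: "(norm ((m, A) - (m', B)))^2 = (norm (m - m'))^2 + (norm (A - B))^2"
  by (simp add: norm_Pair)

lemma W_tri:
  fixes Sa Sb Sc :: "real^'n^'n"
  assumes Sa: "pos_def Sa" and Sb: "pos_def Sb" and Sc: "pos_def Sc"
  shows "sqrt (W2sq ma Sa mc Sc) \<le> sqrt (W2sq ma Sa mb Sb) + sqrt (W2sq mb Sb mc Sc)"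
proof -
  define A where "A = msqrt Sa"
  have AA: "A ** transpose A = Sa" using msqrt_pd[OF Sa] by (simp add: sym_mat_def A_def)
  obtain B where B: "B ** transpose B = Sb" "W2sq ma Sa mb Sb = (norm (ma - mb))^2 + (norm (A - B))^2"
    using W2_eq[OF Sa Sb AA] by blast
  obtain C where C: "C ** transpose C = Sc" "W2sq mb Sb mc Sc = (norm (mb - mc))^2 + (norm (B - C))^2"
    using W2_eq[OF Sb Sc B(1)] by blast
  have "W2sq ma Sa mc Sc \<le> (norm ((ma, A) - (mc, C)))^2"
    using W2_le[OF Sa Sc AA C(1)] by (simp add: norm_Pair)
  then have "sqrt (W2sq ma Sa mc Sc) \<le> norm ((ma, A) - (mc, C))"
    using real_le_lsqrt by (metis norm_ge_zero real_sqrt_le_mono real_sqrt_unique)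
  also have "\<dots> \<le> norm ((ma, A) - (mb, B)) + norm ((mb, B) - (mc, C))"
    by (rule norm_diff_triangle_le[OF order.refl order.refl])
  also have "norm ((ma, A) - (mb, B)) = sqrt (W2sq ma Sa mb Sb)"
    by (simp add: B(2) norm_Pair)
  also have "norm ((mb, B) - (mc, C)) = sqrt (W2sq mb Sb mc Sc)"
    by (simp add: C(2) norm_Pair)
  finally show ?thesis .
qed



lemma RSR_pd:
  fixes S0 S1 :: "real^'n^'n"
  assumes S0: "pos_def S0" and S1: "pos_def S1"
  shows "pos_def (msqrt S0 ** S1 ** msqrt S0)"
proof -
  define R where "R = msqrt S0"
  note Rp = msqrt_pd[OF S0, folded R_def]
  have Rt: "transpose R = R" using Rp(2) by (simp add: sym_mat_def)
  have "pos_def (R ** S1 ** R)"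
    unfolding pos_def_def
  proof (intro conjI allI impI)
    show "sym_mat (R ** S1 ** R)" using S1 Rt
      by (simp add: sym_mat_def matrix_transpose_mul pos_def_def matrix_mul_assoc)
    fix x :: "real^'n" assume x: "x \<noteq> 0"
    have "R *v x \<noteq> 0" using inj_matrix_vector_mult[OF Rp(4)] x by (metis injD matrix_vector_mult_0_right)
    then have "(R *v x) \<bullet> (S1 *v (R *v x)) > 0" using S1 by (simp add: pos_def_def)
    moreover have "x \<bullet> ((R ** S1 ** R) *v x) = (R *v x) \<bullet> (S1 *v (R *v x))"
      using sym_dot[OF Rp(2), of x "S1 *v (R *v x)"]
      by (simp add: matrix_vector_mul_assoc[symmetric])
    ultimately show "x \<bullet> ((R ** S1 ** R) *v x) > 0" by simp
  qed
  then show ?thesis by (simp add: R_def)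
qed

locale gpair =
  fixes S0 S1 :: "real^'n^'n"
  assumes S0: "pos_def S0" and S1: "pos_def S1"
begin

definition "R = msqrt S0"
definition "Ri = matrix_inv R"
definition "K = msqrt (R ** S1 ** R)"
definition "B0 = Ri ** K"
definition "At t = (1 - t) *\<^sub>R R + t *\<^sub>R B0"

lemma Rp: "pos_def R" "sym_mat R" "R ** R = S0" "invertible R"
  using msqrt_pd[OF S0] by (auto simp: R_def)

lemma RRi: "R ** Ri = mat 1" "Ri ** R = mat 1" using matrix_inv[OF Rp(4)] by (auto simp: Ri_def)
lemma Rt: "transpose R = R" using Rp(2) by (simp add: sym_mat_def)
lemma Rit: "transpose Ri = Ri" using sym_inv[OF Rp(2) Rp(4)] by (simp add: Ri_def sym_mat_def)
lemma Kp: "pos_def K" "sym_mat K" "invertible K"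
  using msqrt_pd[OF RSR_pd[OF S0 S1]] by (auto simp: K_def R_def)
lemma Kt: "transpose K = K" using Kp(2) by (simp add: sym_mat_def)
lemma S0t: "transpose S0 = S0" using S0 by (simp add: pos_def_def sym_mat_def)

lemma At_eq: "At t = Ri ** ((1 - t) *\<^sub>R S0 + t *\<^sub>R K)"
proof -
  have RiS0: "Ri ** S0 = R" by (metis Rp(3) RRi(2) matrix_mul_assoc matrix_mul_lid)
  have "Ri ** ((1 - t) *\<^sub>R S0 + t *\<^sub>R K) = (1 - t) *\<^sub>R R + t *\<^sub>R (Ri ** K)"
    by (simp add: mm_add_l mm_scale_r RiS0)
  then show ?thesis by (simp add: RRi At_def B0_def)
qed

lemma At_cov: "At t ** transpose (At t) = interp_cov S0 S1 t"
proof -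
  define M where "M = (1 - t) *\<^sub>R S0 + t *\<^sub>R K"
  have Mt: "transpose M = M"
    by (simp add: M_def transpose_add transpose_scalar S0t Kt)
  have "At t ** transpose (At t) = Ri ** M ** M ** Ri"
    by (simp add: At_eq M_def[symmetric] matrix_transpose_mul Mt Rit matrix_mul_assoc)
  then show ?thesis
    by (simp add: interp_cov_def Let_def M_def K_def R_def Ri_def)
qed

lemma cov_pd:
  assumes "0 \<le> t" "t \<le> 1"
  shows "pos_def (interp_cov S0 S1 t)"
proof -
  define M where "M = (1 - t) *\<^sub>R S0 + t *\<^sub>R K"
  have "pos_def M"
    unfolding pos_def_def
  proof (intro conjI allI impI)
    show "sym_mat M" using S0t Kt
      by (simp add: sym_mat_def M_def transpose_add transpose_scalar)
    fix x :: "real^'n" assume x: "x \<noteq> 0"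
    have a: "x \<bullet> (S0 *v x) > 0" using S0 x by (simp add: pos_def_def)
    have b: "x \<bullet> (K *v x) > 0" using Kp(1) x by (simp add: pos_def_def)
    have "x \<bullet> (M *v x) = (1 - t) * (x \<bullet> (S0 *v x)) + t * (x \<bullet> (K *v x))"
      by (simp add: M_def matrix_vector_mult_add_rdistrib scaleR_matrix_vector_assoc[symmetric]
          inner_add_right)
    also have "\<dots> > 0"
    proof (cases "t = 1")
      case True then show ?thesis using b by simp
    next
      case False
      then have "(1 - t) * (x \<bullet> (S0 *v x)) > 0" using assms a by simp
      moreover have "t * (x \<bullet> (K *v x)) \<ge> 0" using assms b by simp
      ultimately show ?thesis by linarith
    qed
    finally show "x \<bullet> (M *v x) > 0" .
  qed
  then have "invertible M" by (rule pd_invertible)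
  moreover have "invertible Ri" using RRi(1) invertible_left_inverse by blast
  ultimately have "invertible (At t)" by (simp add: At_eq M_def[symmetric] invertible_mult)
  then show ?thesis using invertible_AAt_pd At_cov by metis
qed

lemma cov_0: "interp_cov S0 S1 0 = S0"
  using At_cov[of 0] by (simp add: At_def Rt Rp(3))

lemma cov_1: "interp_cov S0 S1 1 = S1"
  using At_cov[of 1] key_eq(1)[OF S0 S1] by (simp add: At_def B0_def Ri_def K_def R_def)

lemma W01: "W2sq m0 S0 m1 S1 = (norm (m0 - m1))^2 + (norm (R - B0))^2"
proof -
  have "(norm (R - B0))^2 = trace S0 + trace S1 - 2 * trace K"
    using norm_diff_sq_trace[of R B0] key_eq[OF S0 S1] Rp(3) Rt
    by (simp add: B0_def Ri_def K_def R_def)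
  then show ?thesis by (simp add: W2sq_expand K_def R_def)
qed

lemma geo:
  assumes "0 \<le> u" "u \<le> 1" "0 \<le> v" "v \<le> 1"
  shows "W2sq (interp_mean m0 m1 u) (interp_cov S0 S1 u) (interp_mean m0 m1 v) (interp_cov S0 S1 v)
         \<le> (u - v)^2 * W2sq m0 S0 m1 S1"
proof -
  have "W2sq (interp_mean m0 m1 u) (interp_cov S0 S1 u) (interp_mean m0 m1 v) (interp_cov S0 S1 v)
     \<le> (norm (interp_mean m0 m1 u - interp_mean m0 m1 v))^2 + (norm (At u - At v))^2"
    by (rule W2_le[OF cov_pd[OF assms(1,2)] cov_pd[OF assms(3,4)] At_cov At_cov])
  also have "interp_mean m0 m1 u - interp_mean m0 m1 v = (v - u) *\<^sub>R (m0 - m1)"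
    by (simp add: interp_mean_def algebra_simps)
  also have "At u - At v = (v - u) *\<^sub>R (R - B0)"
    by (simp add: At_def algebra_simps)
  also have "(norm ((v - u) *\<^sub>R (m0 - m1)))^2 + (norm ((v - u) *\<^sub>R (R - B0)))^2
       = (u - v)^2 * W2sq m0 S0 m1 S1"
  proof -
    have sc: "(norm ((v - u) *\<^sub>R x))^2 = (u - v)^2 * (norm x)^2" for x :: "'a::real_normed_vector"
      by (simp only: norm_scaleR power_mult_distrib power2_abs power2_commute)
    show ?thesis by (simp only: sc W01 distrib_left)
  qed
  finally show ?thesis .
qed

end



lemma sum_prod_split: "(\<Sum>x\<in>A \<times> B. h x) = (\<Sum>a\<in>A. \<Sum>b\<in>B. h (a, b))"
  by (simp add: sum.cartesian_product)

lemma mix_lower: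
  fixes I :: "'a set" and J :: "'b set"
    and pistar :: "'a \<Rightarrow> 'b \<Rightarrow> real" and w :: "'a \<Rightarrow> 'b \<Rightarrow> real"
    and g cst :: "('a \<times> 'b) \<Rightarrow> ('a \<times> 'b) \<Rightarrow> real"
  assumes fin: "finite I" "finite J"
    and g: "g \<in> couplings (I \<times> J) (I \<times> J) (\<lambda>(i, j). pistar i j) (\<lambda>(i, j). pistar i j)"
    and coup: "pistar \<in> couplings I J p0 p1"
    and opt: "\<forall>\<sigma>\<in>couplings I J p0 p1. (\<Sum>i\<in>I. \<Sum>j\<in>J. w i j * pistar i j) \<le> (\<Sum>i\<in>I. \<Sum>j\<in>J. w i j * \<sigma> i j)"
    and w0: "\<And>i j. i \<in> I \<Longrightarrow> j \<in> J \<Longrightarrow> w i j \<ge> 0"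
    and c0: "\<And>x y. x \<in> I \<times> J \<Longrightarrow> y \<in> I \<times> J \<Longrightarrow> cst x y \<ge> 0"
    and tri: "\<And>i j k l. i \<in> I \<Longrightarrow> j \<in> J \<Longrightarrow> k \<in> I \<Longrightarrow> l \<in> J \<Longrightarrow>
       sqrt (w i l) \<le> s * sqrt (w i j) + sqrt (cst (i, j) (k, l)) + (1 - t) * sqrt (w k l)"
    and st: "0 \<le> s" "s \<le> t" "t \<le> 1"
  shows "(t - s)^2 * (\<Sum>i\<in>I. \<Sum>j\<in>J. w i j * pistar i j) \<le> (\<Sum>x\<in>I \<times> J. \<Sum>y\<in>I \<times> J. cst x y * g x y)"
proof -
  let ?P = "I \<times> J"
  let ?Z = "?P \<times> ?P"
  define D where "D = (\<Sum>i\<in>I. \<Sum>j\<in>J. w i j * pistar i j)"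
  have g0: "\<And>x y. x \<in> ?P \<Longrightarrow> y \<in> ?P \<Longrightarrow> g x y \<ge> 0"
    and grow: "\<And>x. x \<in> ?P \<Longrightarrow> (\<Sum>y\<in>?P. g x y) = (case x of (i, j) \<Rightarrow> pistar i j)"
    and gcol: "\<And>y. y \<in> ?P \<Longrightarrow> (\<Sum>x\<in>?P. g x y) = (case y of (i, j) \<Rightarrow> pistar i j)"
    using g unfolding couplings_def by auto
  define \<sigma> where "\<sigma> i l = (\<Sum>j\<in>J. \<Sum>k\<in>I. g (i, j) (k, l))" for i l
  have sig: "\<sigma> \<in> couplings I J p0 p1"
    unfolding couplings_def
  proof (intro CollectI conjI ballI)
    fix i l assume "i \<in> I" "l \<in> J"
    then show "0 \<le> \<sigma> i l" unfolding \<sigma>_def using g0 by (auto intro!: sum_nonneg)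
  next
    fix i assume i: "i \<in> I"
    have "(\<Sum>l\<in>J. \<sigma> i l) = (\<Sum>j\<in>J. \<Sum>l\<in>J. \<Sum>k\<in>I. g (i, j) (k, l))"
      unfolding \<sigma>_def by (rule sum.swap)
    also have "\<dots> = (\<Sum>j\<in>J. \<Sum>y\<in>?P. g (i, j) y)"
      by (intro sum.cong refl) (simp add: sum_prod_split, rule sum.swap)
    also have "\<dots> = (\<Sum>j\<in>J. pistar i j)" using grow i by (intro sum.cong refl) auto
    also have "\<dots> = p0 i" using coup i unfolding couplings_def by auto
    finally show "(\<Sum>l\<in>J. \<sigma> i l) = p0 i" .
  next
    fix l assume l: "l \<in> J"
    have "(\<Sum>i\<in>I. \<sigma> i l) = (\<Sum>x\<in>?P. \<Sum>k\<in>I. g x (k, l))"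
      unfolding \<sigma>_def by (simp add: sum_prod_split)
    also have "\<dots> = (\<Sum>k\<in>I. \<Sum>x\<in>?P. g x (k, l))" by (rule sum.swap)
    also have "\<dots> = (\<Sum>k\<in>I. pistar k l)" using gcol l by (intro sum.cong refl) auto
    also have "\<dots> = p1 l" using coup l unfolding couplings_def by auto
    finally show "(\<Sum>i\<in>I. \<sigma> i l) = p1 l" .
  qed
  have "D \<le> (\<Sum>i\<in>I. \<Sum>l\<in>J. w i l * \<sigma> i l)" using opt sig by (simp add: D_def)
  also have "\<dots> = (\<Sum>z\<in>?Z. w (fst (fst z)) (snd (snd z)) * g (fst z) (snd z))"
  proof -
    have "(\<Sum>i\<in>I. \<Sum>l\<in>J. w i l * \<sigma> i l) = (\<Sum>i\<in>I. \<Sum>l\<in>J. \<Sum>j\<in>J. \<Sum>k\<in>I. w i l * g (i, j) (k, l))"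
      by (simp add: \<sigma>_def sum_distrib_left)
    also have "\<dots> = (\<Sum>i\<in>I. \<Sum>j\<in>J. \<Sum>l\<in>J. \<Sum>k\<in>I. w i l * g (i, j) (k, l))"
      by (rule sum.cong[OF refl], rule sum.swap)
    also have "\<dots> = (\<Sum>i\<in>I. \<Sum>j\<in>J. \<Sum>k\<in>I. \<Sum>l\<in>J. w i l * g (i, j) (k, l))"
      by (rule sum.cong[OF refl], rule sum.cong[OF refl], rule sum.swap)
    also have "\<dots> = (\<Sum>z\<in>?Z. w (fst (fst z)) (snd (snd z)) * g (fst z) (snd z))"
      by (simp add: sum_prod_split)
    finally show ?thesis .
  qed
  finally have D1: "D \<le> (\<Sum>z\<in>?Z. w (fst (fst z)) (snd (snd z)) * g (fst z) (snd z))" .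
  define a where "a z = sqrt (g (fst z) (snd z)) * (s * sqrt (w (fst (fst z)) (snd (fst z))))" for z
  define b where "b z = sqrt (g (fst z) (snd z)) * sqrt (cst (fst z) (snd z))" for z
  define c where "c z = sqrt (g (fst z) (snd z)) * ((1 - t) * sqrt (w (fst (snd z)) (snd (snd z))))" for z
  have finZ: "finite ?Z" using fin by simp
  have pt: "w (fst (fst z)) (snd (snd z)) * g (fst z) (snd z) \<le> (a z + b z + c z)^2" if z: "z \<in> ?Z" for z
  proof -
    obtain i j k l where zz: "z = ((i, j), (k, l))" by (metis prod.exhaust)
    have ijkl: "i \<in> I" "j \<in> J" "k \<in> I" "l \<in> J" using z zz by auto
    have gz: "g (i, j) (k, l) \<ge> 0" using g0 ijkl by auto
    have "sqrt (w i l) \<le> s * sqrt (w i j) + sqrt (cst (i, j) (k, l)) + (1 - t) * sqrt (w k l)"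
      by (rule tri[OF ijkl])
    then have "sqrt (g (i, j) (k, l)) * sqrt (w i l) \<le> a z + b z + c z"
      using gz by (simp add: zz a_def b_def c_def distrib_left[symmetric] mult_left_mono)
    moreover have "0 \<le> sqrt (g (i, j) (k, l)) * sqrt (w i l)" using gz w0 ijkl by simp
    ultimately have "(sqrt (g (i, j) (k, l)) * sqrt (w i l))^2 \<le> (a z + b z + c z)^2"
      by (simp add: power_mono)
    moreover have "(sqrt (g (i, j) (k, l)) * sqrt (w i l))^2 = w i l * g (i, j) (k, l)"
      using gz w0 ijkl by (simp add: power_mult_distrib)
    ultimately show ?thesis by (simp add: zz)
  qed
  have "sqrt D \<le> L2_set (\<lambda>z. a z + b z + c z) ?Z"
    unfolding L2_set_def using D1 pt
    by (meson order_trans real_sqrt_le_mono sum_mono)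
  also have "\<dots> \<le> L2_set a ?Z + L2_set b ?Z + L2_set c ?Z"
    using L2_set_triangle_ineq[of "\<lambda>z. a z + b z" c ?Z] L2_set_triangle_ineq[of a b ?Z] by simp
  also have "L2_set a ?Z = s * sqrt D"
  proof -
    have "(\<Sum>z\<in>?Z. (a z)^2) = (\<Sum>z\<in>?Z. s^2 * (w (fst (fst z)) (snd (fst z)) * g (fst z) (snd z)))"
      using g0 w0 by (intro sum.cong refl) (auto simp: a_def power_mult_distrib)
    also have "\<dots> = (\<Sum>x\<in>?P. \<Sum>y\<in>?P. s^2 * (w (fst x) (snd x) * g x y))"
      by (simp only: sum_prod_split[of _ "I \<times> J" "I \<times> J"] fst_conv snd_conv)
    also have "\<dots> = s^2 * (\<Sum>x\<in>?P. w (fst x) (snd x) * (\<Sum>y\<in>?P. g x y))"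
      by (simp add: sum_distrib_left)
    also have "\<dots> = s^2 * (\<Sum>x\<in>?P. w (fst x) (snd x) * pistar (fst x) (snd x))"
      using grow by (auto intro!: sum.cong simp: split_def)
    also have "\<dots> = s^2 * D" by (simp add: D_def sum_prod_split)
    finally show ?thesis using st by (simp add: L2_set_def real_sqrt_mult)
  qed
  also have "L2_set c ?Z = (1 - t) * sqrt D"
  proof -
    have "(\<Sum>z\<in>?Z. (c z)^2) = (\<Sum>z\<in>?Z. (1 - t)^2 * (w (fst (snd z)) (snd (snd z)) * g (fst z) (snd z)))"
      using g0 w0 by (intro sum.cong refl) (auto simp: c_def power_mult_distrib)
    also have "\<dots> = (\<Sum>x\<in>?P. \<Sum>y\<in>?P. (1 - t)^2 * (w (fst y) (snd y) * g x y))"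
      by (simp only: sum_prod_split[of _ "I \<times> J" "I \<times> J"] fst_conv snd_conv)
    also have "\<dots> = (\<Sum>y\<in>?P. \<Sum>x\<in>?P. (1 - t)^2 * (w (fst y) (snd y) * g x y))"
      by (rule sum.swap)
    also have "\<dots> = (1 - t)^2 * (\<Sum>y\<in>?P. w (fst y) (snd y) * (\<Sum>x\<in>?P. g x y))"
      by (simp add: sum_distrib_left)
    also have "\<dots> = (1 - t)^2 * (\<Sum>y\<in>?P. w (fst y) (snd y) * pistar (fst y) (snd y))"
      using gcol by (auto intro!: sum.cong simp: split_def)
    also have "\<dots> = (1 - t)^2 * D" by (simp add: D_def sum_prod_split)
    finally show ?thesis using st by (simp add: L2_set_def real_sqrt_mult)
  qed
  also have "L2_set b ?Z = sqrt (\<Sum>x\<in>?P. \<Sum>y\<in>?P. cst x y * g x y)"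
  proof -
    have "(\<Sum>z\<in>?Z. (b z)^2) = (\<Sum>z\<in>?Z. cst (fst z) (snd z) * g (fst z) (snd z))"
      using g0 c0 by (intro sum.cong refl) (auto simp: b_def power_mult_distrib)
    then show ?thesis
      using sum_prod_split[of "\<lambda>z. cst (fst z) (snd z) * g (fst z) (snd z)" ?P ?P]
      by (simp add: L2_set_def)
  qed
  finally have le: "(t - s) * sqrt D \<le> sqrt (\<Sum>x\<in>?P. \<Sum>y\<in>?P. cst x y * g x y)"
    by (simp add: algebra_simps)
  have Dn: "D \<ge> 0" unfolding D_def
    using w0 coup by (auto intro!: sum_nonneg simp: couplings_def)
  have C0: "0 \<le> (\<Sum>x\<in>?P. \<Sum>y\<in>?P. cst x y * g x y)"
    using c0 g0 by (auto intro!: sum_nonneg mult_nonneg_nonneg)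
  have "0 \<le> (t - s) * sqrt D" using st Dn by simp
  then have "((t - s) * sqrt D)^2 \<le> (sqrt (\<Sum>x\<in>?P. \<Sum>y\<in>?P. cst x y * g x y))^2"
    using le by (simp add: power_mono)
  also have "\<dots> = (\<Sum>x\<in>?P. \<Sum>y\<in>?P. cst x y * g x y)" using C0 by simp
  finally show ?thesis using Dn by (simp add: D_def power_mult_distrib)
qed



theorem theorem2:
  fixes N0 N1 :: nat
    and p0 p1 :: "nat \<Rightarrow> real"
    and m0 m1 :: "nat \<Rightarrow> real^'n"
    and S0 S1 :: "nat \<Rightarrow> real^'n^'n"
    and pistar :: "nat \<Rightarrow> nat \<Rightarrow> real"
    and s t :: real
  assumes mix0: "gaussian_mixture {..<N0} p0 m0 S0"
    and mix1: "gaussian_mixture {..<N1} p1 m1 S1"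
    and coup: "pistar \<in> couplings {..<N0} {..<N1} p0 p1"
    and opt: "\<forall>\<pi>\<in>couplings {..<N0} {..<N1} p0 p1.
                mix_cost {..<N0} m0 S0 {..<N1} m1 S1 pistar
                \<le> mix_cost {..<N0} m0 S0 {..<N1} m1 S1 \<pi>"
    and st: "0 \<le> s" "s < t" "t \<le> 1"
  shows "mix_dist ({..<N0} \<times> {..<N1}) (\<lambda>(i, j). pistar i j)
            (\<lambda>(i, j). interp_mean (m0 i) (m1 j) s) (\<lambda>(i, j). interp_cov (S0 i) (S1 j) s)
          ({..<N0} \<times> {..<N1}) (\<lambda>(i, j). pistar i j)
            (\<lambda>(i, j). interp_mean (m0 i) (m1 j) t) (\<lambda>(i, j). interp_cov (S0 i) (S1 j) t)
         = (t - s) * mix_dist {..<N0} p0 m0 S0 {..<N1} p1 m1 S1"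
proof -
  define I where "I = {..<N0}"
  define J where "J = {..<N1}"
  define P where "P = I \<times> J"
  define pi' where "pi' = (\<lambda>(i::nat, j::nat). pistar i j)"
  define ms where "ms = (\<lambda>(i, j). interp_mean (m0 i) (m1 j) s)"
  define Cs where "Cs = (\<lambda>(i, j). interp_cov (S0 i) (S1 j) s)"
  define mt where "mt = (\<lambda>(i, j). interp_mean (m0 i) (m1 j) t)"
  define Ct where "Ct = (\<lambda>(i, j). interp_cov (S0 i) (S1 j) t)"
  define w where "w i j = W2sq (m0 i) (S0 i) (m1 j) (S1 j)" for i j
  define cst where "cst x y = W2sq (ms x) (Cs x) (mt y) (Ct y)" for x y
  define D where "D = mix_cost I m0 S0 J m1 S1 pistar"
  have finI: "finite I" and finJ: "finite J" by (simp_all add: I_def J_def)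
  have pd0: "\<And>i. i \<in> I \<Longrightarrow> pos_def (S0 i)" using mix0 by (simp add: I_def gaussian_mixture_def)
  have pd1: "\<And>j. j \<in> J \<Longrightarrow> pos_def (S1 j)" using mix1 by (simp add: J_def gaussian_mixture_def)
  have gp: "\<And>i j. i \<in> I \<Longrightarrow> j \<in> J \<Longrightarrow> gpair (S0 i) (S1 j)"
    using pd0 pd1 by (simp add: gpair_def)
  have D_eq: "D = (\<Sum>i\<in>I. \<Sum>j\<in>J. w i j * pistar i j)" by (simp add: D_def mix_cost_def w_def)
  have w0: "\<And>i j. i \<in> I \<Longrightarrow> j \<in> J \<Longrightarrow> w i j \<ge> 0"
    using pd0 pd1 W2_nonneg unfolding w_def by blast
  have Dn: "D \<ge> 0" unfolding D_eq
    using w0 coup by (auto intro!: sum_nonneg simp: couplings_def I_def J_def)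
  have d01: "mix_dist I p0 m0 S0 J p1 m1 S1 = sqrt D"
  proof -
    have "Inf (mix_cost I m0 S0 J m1 S1 ` couplings I J p0 p1) = D"
      using coup opt by (intro cInf_eq_minimum) (auto simp: D_def I_def J_def)
    then show ?thesis by (simp add: mix_dist_def)
  qed
  have cost_eq: "mix_cost P ms Cs P mt Ct \<gamma> = (\<Sum>x\<in>P. \<Sum>y\<in>P. cst x y * \<gamma> x y)" for \<gamma>
    by (simp add: mix_cost_def cst_def)
  have cov_pd_s: "pos_def (Cs x)" if "x \<in> P" for x
    using that gpair.cov_pd[OF gp, of _ _ s] st by (auto simp: Cs_def P_def)
  have cov_pd_t: "pos_def (Ct x)" if "x \<in> P" for x
    using that gpair.cov_pd[OF gp, of _ _ t] st by (auto simp: Ct_def P_def)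
  have lower: "(t - s)^2 * D \<le> mix_cost P ms Cs P mt Ct \<gamma>"
    if g: "\<gamma> \<in> couplings P P pi' pi'" for \<gamma>
  proof -
    have "(t - s)^2 * (\<Sum>i\<in>I. \<Sum>j\<in>J. w i j * pistar i j) \<le> (\<Sum>x\<in>I \<times> J. \<Sum>y\<in>I \<times> J. cst x y * \<gamma> x y)"
    proof (rule mix_lower[OF finI finJ _ _ _ w0])
      show "\<gamma> \<in> couplings (I \<times> J) (I \<times> J) (\<lambda>(i, j). pistar i j) (\<lambda>(i, j). pistar i j)"
        using g by (simp add: P_def pi'_def)
      show "pistar \<in> couplings I J p0 p1" using coup by (simp add: I_def J_def)
      show "\<forall>\<sigma>\<in>couplings I J p0 p1. (\<Sum>i\<in>I. \<Sum>j\<in>J. w i j * pistar i j) \<le> (\<Sum>i\<in>I. \<Sum>j\<in>J. w i j * \<sigma> i j)"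
        using opt by (simp add: I_def J_def mix_cost_def w_def)
      show "\<And>x y. x \<in> I \<times> J \<Longrightarrow> y \<in> I \<times> J \<Longrightarrow> cst x y \<ge> 0"
        using cov_pd_s cov_pd_t W2_nonneg unfolding cst_def P_def by blast
      show "0 \<le> s" "s \<le> t" "t \<le> 1" using st by simp_all
      fix i j k l assume ijkl: "i \<in> I" "j \<in> J" "k \<in> I" "l \<in> J"
      have a: "sqrt (W2sq (m0 i) (S0 i) (ms (i, j)) (Cs (i, j))) \<le> s * sqrt (w i j)"
      proof -
        have "W2sq (m0 i) (S0 i) (ms (i, j)) (Cs (i, j)) \<le> (0 - s)^2 * w i j"
          using gpair.geo[OF gp[OF ijkl(1,2)], of 0 s "m0 i" "m1 j"] st
            gpair.cov_0[OF gp[OF ijkl(1,2)]]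
          by (simp add: ms_def Cs_def w_def interp_mean_def)
        then have "sqrt (W2sq (m0 i) (S0 i) (ms (i, j)) (Cs (i, j))) \<le> sqrt (s^2 * w i j)"
          by (simp add: real_sqrt_le_mono)
        also have "\<dots> = s * sqrt (w i j)" using st by (simp add: real_sqrt_mult)
        finally show ?thesis .
      qed
      have c: "sqrt (W2sq (mt (k, l)) (Ct (k, l)) (m1 l) (S1 l)) \<le> (1 - t) * sqrt (w k l)"
      proof -
        have "W2sq (mt (k, l)) (Ct (k, l)) (m1 l) (S1 l) \<le> (t - 1)^2 * w k l"
          using gpair.geo[OF gp[OF ijkl(3,4)], of t 1 "m0 k" "m1 l"] st
            gpair.cov_1[OF gp[OF ijkl(3,4)]]
          by (simp add: mt_def Ct_def w_def interp_mean_def)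
        then have "sqrt (W2sq (mt (k, l)) (Ct (k, l)) (m1 l) (S1 l)) \<le> sqrt ((1 - t)^2 * w k l)"
          by (simp add: real_sqrt_le_mono power2_commute)
        also have "\<dots> = (1 - t) * sqrt (w k l)" using st by (simp add: real_sqrt_mult)
        finally show ?thesis .
      qed
      have ps: "pos_def (Cs (i, j))" and pt: "pos_def (Ct (k, l))"
        using cov_pd_s cov_pd_t ijkl by (auto simp: P_def)
      have "sqrt (w i l) \<le> sqrt (W2sq (m0 i) (S0 i) (ms (i, j)) (Cs (i, j)))
              + sqrt (W2sq (ms (i, j)) (Cs (i, j)) (m1 l) (S1 l))"
        unfolding w_def by (rule W_tri[OF pd0[OF ijkl(1)] ps pd1[OF ijkl(4)]])
      also have "sqrt (W2sq (ms (i, j)) (Cs (i, j)) (m1 l) (S1 l)) \<le>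
          sqrt (cst (i, j) (k, l)) + sqrt (W2sq (mt (k, l)) (Ct (k, l)) (m1 l) (S1 l))"
        unfolding cst_def by (rule W_tri[OF ps pt pd1[OF ijkl(4)]])
      finally show "sqrt (w i l) \<le> s * sqrt (w i j) + sqrt (cst (i, j) (k, l)) + (1 - t) * sqrt (w k l)"
        using a c by linarith
    qed
    then show ?thesis by (subst cost_eq) (simp add: D_eq P_def)
  qed
  define \<gamma>0 where "\<gamma>0 x y = (if x = y then pi' x else 0)" for x y :: "nat \<times> nat"
  have g0c: "\<gamma>0 \<in> couplings P P pi' pi'"
    unfolding couplings_def
  proof (intro CollectI conjI ballI)
    fix x y assume "x \<in> P" "y \<in> P"
    then show "0 \<le> \<gamma>0 x y" using coup
      by (auto simp: \<gamma>0_def pi'_def couplings_def P_def I_def J_def)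
  next
    fix x assume "x \<in> P"
    then show "(\<Sum>y\<in>P. \<gamma>0 x y) = pi' x" by (simp add: \<gamma>0_def finI finJ P_def)
  next
    fix y assume "y \<in> P"
    then show "(\<Sum>x\<in>P. \<gamma>0 x y) = pi' y" by (simp add: \<gamma>0_def finI finJ P_def)
  qed
  have upper: "mix_cost P ms Cs P mt Ct \<gamma>0 \<le> (t - s)^2 * D"
  proof -
    have "mix_cost P ms Cs P mt Ct \<gamma>0 = (\<Sum>x\<in>P. cst x x * pi' x)"
      unfolding cost_eq \<gamma>0_def by (simp add: finI finJ P_def if_distrib cong: if_cong)
    also have "\<dots> \<le> (\<Sum>x\<in>P. (t - s)^2 * (w (fst x) (snd x) * pi' x))"
    proof (rule sum_mono)
      fix x assume x: "x \<in> P"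
      obtain i j where xx: "x = (i, j)" by (metis prod.exhaust)
      have ij: "i \<in> I" "j \<in> J" using x xx by (auto simp: P_def)
      have "cst x x \<le> (s - t)^2 * w i j"
        using gpair.geo[OF gp[OF ij], of s t "m0 i" "m1 j"] st
        by (simp add: cst_def xx ms_def Cs_def mt_def Ct_def w_def)
      moreover have "pi' x \<ge> 0" using coup ij by (auto simp: xx pi'_def couplings_def I_def J_def)
      ultimately show "cst x x * pi' x \<le> (t - s)^2 * (w (fst x) (snd x) * pi' x)"
        by (simp add: xx power2_commute mult_right_mono mult.assoc[symmetric])
    qed
    also have "\<dots> = (t - s)^2 * D"
      by (simp add: D_eq sum_distrib_left[symmetric] P_def sum_prod_split pi'_def)
    finally show ?thesis .
  qed
  have inf_eq: "Inf (mix_cost P ms Cs P mt Ct ` couplings P P pi' pi') = (t - s)^2 * D"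
  proof (rule order.antisym)
    have "Inf (mix_cost P ms Cs P mt Ct ` couplings P P pi' pi') \<le> mix_cost P ms Cs P mt Ct \<gamma>0"
      using g0c lower by (intro cInf_lower) (auto simp: bdd_below_def)
    then show "Inf (mix_cost P ms Cs P mt Ct ` couplings P P pi' pi') \<le> (t - s)^2 * D"
      using upper by linarith
    show "(t - s)^2 * D \<le> Inf (mix_cost P ms Cs P mt Ct ` couplings P P pi' pi')"
      using g0c lower by (intro cInf_greatest) auto
  qed
  have "mix_dist P pi' ms Cs P pi' mt Ct = (t - s) * sqrt D"
    using inf_eq st by (simp add: mix_dist_def real_sqrt_mult)
  then show ?thesis
    using d01 by (simp add: P_def I_def J_def pi'_def ms_def Cs_def mt_def Ct_def)
qed

end
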